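(* There is a compactly generated subgroup $H_0$ of $\mathbb Z^\omega$ such that for every compactly generated subgroup $H$ of $\mathbb Z^\omega$ there is a continuous group homomorphism $\varphi:\mathbb Z^\omega\to\mathbb Z^\omega$ with $\varphi^{-1}(H_0)=H$.
   Context: $\mathbb Z$ carries the discrete topology and $\mathbb Z^\omega$ the product topology. A subgroup is compactly generated if it is the subgroup generated by some compact set. *)

theory Defs
  imports "HOL-Analysis.Analysis" "HOL-Computational_Algebra.Group_Closure" "HOL-Library.Function_Algebras"
begin

text \<open>Z^omega is modelled as the type nat => int; int carries its standard (discrete)
  metric topology and the function type carries the product topology
  (HOL-Analysis Function_Topology). group_closure K is the subgroup generated by K.\<close>

definition compactly_generated :: "(nat \<Rightarrow> int) set \<Rightarrow> bool" where
  "compactly_generated H \<longleftrightarrow> (\<exists>K. compact K \<and> H = group_closure K)"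

end

theory Submission
  imports Defs "HOL-Library.Countable"
begin

instance int :: topological_ab_group_add
  by standard (simp add: nhds_discrete filterlim_principal eventually_principal)

fun gsums :: "nat \<Rightarrow> 'a::ab_group_add set \<Rightarrow> 'a set" where
  "gsums 0 A = {0}"
| "gsums (Suc N) A = (\<lambda>p. fst p + fst (snd p) - snd (snd p)) ` (gsums N A \<times> insert 0 A \<times> insert 0 A)"

declare gsums.simps(2)[simp del]

lemma gsums_SucE: "x \<in> gsums (Suc N) A \<Longrightarrow> \<exists>s a b. s \<in> gsums N A \<and> a \<in> insert 0 A \<and> b \<in> insert 0 A \<and> x = s + a - b"
proof -
  assume "x \<in> gsums (Suc N) A"
  then obtain p where p: "p \<in> gsums N A \<times> insert 0 A \<times> insert 0 A" "x = fst p + fst (snd p) - snd (snd p)"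
    unfolding gsums.simps(2) by blast
  then show ?thesis by (metis mem_Times_iff)
qed

lemma gsums_gc: "x \<in> gsums N A \<Longrightarrow> x \<in> group_closure A"
proof (induction N arbitrary: x)
  case 0 then show ?case by simp
next
  case (Suc N)
  then obtain s a b where "s \<in> gsums N A" "a \<in> insert 0 A" "b \<in> insert 0 A" "x = s + a - b"
    using gsums_SucE by meson
  then show ?case using Suc.IH
    by (metis group_closure.base group_closure.diff group_closure_add)
qed

lemma gsums_SucI: "s \<in> gsums N A \<Longrightarrow> a \<in> insert 0 A \<Longrightarrow> b \<in> insert 0 A \<Longrightarrow> s + a - b \<in> gsums (Suc N) A"
  unfolding gsums.simps(2) by (rule image_eqI[where x="(s,a,b)"]) (simp_all only: mem_Times_iff fst_conv snd_conv)

lemma gsums_diff: "s \<in> gsums N A \<Longrightarrow> t \<in> gsums M A \<Longrightarrow> s - t \<in> gsums (N+M) A"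
proof (induction M arbitrary: t)
  case 0 then show ?case by simp
next
  case (Suc M)
  then obtain t' a b where t: "t' \<in> gsums M A" "a \<in> insert 0 A" "b \<in> insert 0 A" "t = t' + a - b"
    using gsums_SucE by meson
  have "s - t = (s - t') + b - a" using t by (simp add: algebra_simps)
  moreover have "s - t' \<in> gsums (N+M) A" using Suc t by blast
  ultimately show ?case using t gsums_SucI by (metis add_Suc_right)
qed

lemma gc_gsums: "x \<in> group_closure A \<Longrightarrow> \<exists>N. x \<in> gsums N A"
proof (induction rule: group_closure.induct)
  case (base s)
  have "0 + s - 0 \<in> gsums (Suc 0) A" by (rule gsums_SucI) (use base in auto)
  then show ?case by (metis add_0 diff_zero)
next
  case (diff s t)
  then show ?case using gsums_diff by blast
qed

lemma gsums_mono: "A \<subseteq> insert 0 B \<Longrightarrow> x \<in> gsums N A \<Longrightarrow> x \<in> gsums N B"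
proof (induction N arbitrary: x)
  case 0 then show ?case by simp
next
  case (Suc N)
  then obtain s a b where "s \<in> gsums N A" "a \<in> insert 0 A" "b \<in> insert 0 A" "x = s + a - b"
    using gsums_SucE by meson
  then show ?case using Suc gsums_SucI[of s N B a b] by auto
qed

definition additive :: "('a::ab_group_add \<Rightarrow> 'b::ab_group_add) \<Rightarrow> bool" where
  "additive h \<longleftrightarrow> (\<forall>x y. h (x + y) = h x + h y)"

lemma additive_0: "additive h \<Longrightarrow> h 0 = 0"
  unfolding additive_def by (metis add_cancel_right_right add_0)

lemma additive_diff: "additive h \<Longrightarrow> h (x - y) = h x - h y"
  unfolding additive_def by (metis diff_add_cancel eq_diff_eq)

lemma gsums_hom1: "additive h \<Longrightarrow> x \<in> gsums N A \<Longrightarrow> h x \<in> gsums N (h ` A)"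
proof (induction N arbitrary: x)
  case 0 then show ?case by (simp add: additive_0)
next
  case (Suc N)
  then obtain s a b where sab: "s \<in> gsums N A" "a \<in> insert 0 A" "b \<in> insert 0 A" "x = s + a - b"
    using gsums_SucE by meson
  have "h x = h s + h a - h b" using sab Suc.prems
    by (simp add: additive_diff) (simp add: additive_def)
  moreover have "h a \<in> insert 0 (h ` A)" "h b \<in> insert 0 (h ` A)"
    using sab Suc.prems by (auto simp: additive_0)
  ultimately show ?case using Suc sab gsums_SucI by metis
qed

lemma gsums_hom2: "additive h \<Longrightarrow> y \<in> gsums N (h ` A) \<Longrightarrow> \<exists>x\<in>gsums N A. y = h x"
proof (induction N arbitrary: y)
  case 0 then show ?case by (simp add: additive_0)
next
  case (Suc N)
  then obtain s a b where sab: "s \<in> gsums N (h ` A)" "a \<in> insert 0 (h ` A)" "b \<in> insert 0 (h ` A)" "y = s + a - b"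
    using gsums_SucE by meson
  obtain s' where s': "s' \<in> gsums N A" "s = h s'" using Suc sab by blast
  have h0: "h 0 = 0" using Suc.prems(1) by (rule additive_0)
  obtain a' where a': "a' \<in> insert 0 A" "a = h a'" using sab(2) h0 by (metis image_iff insertE insertI1 insertI2)
  obtain b' where b': "b' \<in> insert 0 A" "b = h b'" using sab(3) h0 by (metis image_iff insertE insertI1 insertI2)
  have "y = h (s' + a' - b')" using sab s' a' b' Suc.prems
    by (simp add: additive_diff) (simp add: additive_def)
  then show ?case using gsums_SucI[OF s'(1) a'(1) b'(1)] by blast
qed

lemma gc_hom: "additive h \<Longrightarrow> x \<in> group_closure A \<Longrightarrow> h x \<in> group_closure (h ` A)"
  using gc_gsums gsums_hom1 gsums_gc by metis

lemma gc_mono: "x \<in> group_closure A \<Longrightarrow> A \<subseteq> B \<Longrightarrow> x \<in> group_closure B"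
  by (induction rule: group_closure.induct) (auto intro: group_closure.intros)

lemma compact_int_finite: "compact (S::int set) \<Longrightarrow> finite S"
proof -
  assume cS: "compact S"
  obtain T where "T \<subseteq> S" "finite T" "S \<subseteq> (\<Union>x\<in>T. {x})"
    by (rule compactE_image[of S S "\<lambda>x. {x}"]) (use cS in \<open>auto simp: open_discrete\<close>)
  then show "finite S" by (metis UN_singleton finite_subset)
qed

lemma gsums_compact: "compact (A::(nat\<Rightarrow>int) set) \<Longrightarrow> compact (gsums N A)"
proof (induction N)
  case 0 then show ?case by simp
next
  case (Suc N)
  have c: "continuous_on UNIV (\<lambda>p::(nat\<Rightarrow>int)\<times>(nat\<Rightarrow>int)\<times>(nat\<Rightarrow>int). fst p + fst (snd p) - snd (snd p))"
  proof (rule continuous_on_coordinatewise_then_product)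
    fix i
    show "continuous_on UNIV (\<lambda>p::(nat\<Rightarrow>int)\<times>(nat\<Rightarrow>int)\<times>(nat\<Rightarrow>int). (fst p + fst (snd p) - snd (snd p)) i)"
      by (simp, intro continuous_intros continuous_on_product_then_coordinatewise)
  qed
  have "compact (gsums N A \<times> insert 0 A \<times> insert 0 A)"
    using Suc by (intro compact_Times compact_insert) auto
  then show ?case
    by (simp only: gsums.simps(2)) (rule compact_continuous_image[OF continuous_on_subset[OF c]], auto)
qed

lemma Hausdorff_int: "Hausdorff_space (euclidean :: int topology)"
  unfolding Hausdorff_space_def
proof (intro allI impI)
  fix x y :: int assume "x \<in> topspace euclidean \<and> y \<in> topspace euclidean \<and> x \<noteq> y"
  then show "\<exists>U V. openin euclidean U \<and> openin euclidean V \<and> x \<in> U \<and> y \<in> V \<and> disjnt U V"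
    by (intro exI[of _ "{x}"] exI[of _ "{y}"]) (auto simp: open_discrete)
qed

lemma compact_closed_fun: "compact (C::(nat\<Rightarrow>int) set) \<Longrightarrow> closed C"
proof -
  assume "compact C"
  then have c1: "compactin (product_topology (\<lambda>i. euclidean) UNIV) C"
    by (simp add: euclidean_product_topology)
  have h1: "Hausdorff_space (product_topology (\<lambda>i::nat. (euclidean::int topology)) UNIV)"
    using Hausdorff_int by (simp add: Hausdorff_space_product_topology)
  have "closedin (product_topology (\<lambda>i. euclidean) UNIV) C"
    by (rule compactin_imp_closedin[OF h1 c1])
  then have "closedin euclidean C" by (simp only: euclidean_product_topology)
  then show "closed C" by (simp only: closed_closedin)
qed

lemma pointwise_limit:
  fixes s :: "nat \<Rightarrow> nat \<Rightarrow> int"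
  assumes "\<And>m i. i < m \<Longrightarrow> s m i = x i"
  shows "s \<longlonglongrightarrow> x"
proof -
  have "limitin (product_topology (\<lambda>i. euclidean) UNIV) s x sequentially"
  proof (subst limitin_componentwise, intro conjI ballI)
    fix i :: nat
    have "eventually (\<lambda>m. s m i = x i) sequentially"
      using assms by (auto simp: eventually_sequentially intro!: exI[of _ "Suc i"])
    then have "((\<lambda>m. s m i) \<longlongrightarrow> x i) sequentially"
      by (rule tendsto_eventually)
    then show "limitin euclidean (\<lambda>c. s c i) (x i) sequentially" by simp
  qed auto
  then show ?thesis by (simp add: euclidean_product_topology)
qed

definition ext :: "int list \<Rightarrow> nat \<Rightarrow> int" where
  "ext g i = (if i < length g then g ! i else 0)"

definition R :: "nat \<Rightarrow> (nat \<Rightarrow> int) \<Rightarrow> (nat \<Rightarrow> int)" where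
  "R m k = (\<lambda>i. if i < m then k i else 0)"

definition blk :: "nat \<Rightarrow> (nat \<Rightarrow> int) \<Rightarrow> (nat \<Rightarrow> int)" where
  "blk a y = (\<lambda>i. y (prod_encode (a,i)))"

definition Gs :: "nat \<Rightarrow> int list list" where
  "Gs a = from_nat (snd (prod_decode a))"

definition K0 :: "(nat \<Rightarrow> int) set" where
  "K0 = (\<Inter>a. \<Union>g \<in> insert [] (set (Gs a)). \<Inter>i. {y. y (prod_encode (a,i)) = ext g i})"

lemma K0_iff: "y \<in> K0 \<longleftrightarrow> (\<forall>a. \<exists>g \<in> insert [] (set (Gs a)). blk a y = ext g)"
  unfolding K0_def blk_def fun_eq_iff INT_iff UN_iff mem_Collect_eq by simp

lemma ext_Nil: "ext [] = 0" by (auto simp: ext_def)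

lemma ext_map: "ext (map k [0..<m]) = R m k"
  by (auto simp: ext_def R_def)

lemma additive_R: "additive (R m)" by (auto simp: additive_def R_def)
lemma additive_blk: "additive (blk a)" by (auto simp: additive_def blk_def)

lemma K0_closed: "closed K0"
proof -
  have "closed K0" unfolding K0_def
    by (intro closed_INT closed_UN ballI finite_insert[THEN iffD2] finite_set closed_Collect_eq
        continuous_on_product_coordinates continuous_on_const)
  then show ?thesis .
qed

lemma K0_compact: "compact K0"
proof -
  define S where "S n = (\<lambda>g. ext g (snd (prod_decode n))) ` insert [] (set (Gs (fst (prod_decode n))))" for n
  have fin: "finite (S n)" for n by (simp add: S_def)
  have sub: "K0 \<subseteq> PiE UNIV S"
  proof
    fix y assume y: "y \<in> K0"
    show "y \<in> PiE UNIV S"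
    proof (simp add: PiE_iff, intro allI)
      fix n
      obtain a i where ai: "prod_decode n = (a,i)" by (cases "prod_decode n")
      then have n: "n = prod_encode (a,i)" by (metis prod_decode_inverse)
      obtain g where g: "g \<in> insert [] (set (Gs a))" "blk a y = ext g" using y by (auto simp: K0_iff)
      have "y n = ext g i" using g(2) n by (metis blk_def)
      then show "y n \<in> S n" using g(1) ai by (auto simp: S_def)
    qed
  qed
  have "compactin (product_topology (\<lambda>i. euclidean) UNIV) (PiE UNIV S)"
    by (subst compactin_PiE) (simp add: finite_imp_compact fin)
  then have "compact (PiE UNIV S)" by (simp add: euclidean_product_topology)
  then have "compact (PiE UNIV S \<inter> K0)" using K0_closed by (rule compact_Int_closed)
  then show ?thesis using sub by (simp add: Int_absorb1)
qed

lemma cont_if_coord: "continuous_on UNIV (\<lambda>x::nat\<Rightarrow>int. if P then x j else 0)"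
  by (cases P) simp_all

definition FK :: "(nat \<Rightarrow> int) set \<Rightarrow> nat \<Rightarrow> int list set" where
  "FK K m = (\<lambda>k. map k [0..<m]) ` K"

definition LK :: "(nat \<Rightarrow> int) set \<Rightarrow> nat \<Rightarrow> int list list" where
  "LK K m = (SOME L. set L = FK K m)"

definition codeK :: "(nat \<Rightarrow> int) set \<Rightarrow> nat \<Rightarrow> nat" where
  "codeK K m = to_nat (LK K m)"

definition phi :: "(nat \<Rightarrow> nat) \<Rightarrow> (nat\<Rightarrow>int)\<Rightarrow>(nat\<Rightarrow>int)" where
  "phi code x n = (if snd (prod_decode (fst (prod_decode n))) = code (fst (prod_decode (fst (prod_decode n))))
                 \<and> snd (prod_decode n) < fst (prod_decode (fst (prod_decode n))) then x (snd (prod_decode n)) else 0)"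

lemma finF: "compact K \<Longrightarrow> finite (FK K m)"
proof -
  assume K: "compact K"
  define A where "A = (\<Union>i<m. (\<lambda>k. k i) ` K)"
  have "finite ((\<lambda>k. k i) ` K)" for i
    by (intro compact_int_finite compact_continuous_image K continuous_on_subset[OF continuous_on_product_coordinates] subset_UNIV)
  then have "finite A" unfolding A_def by blast
  moreover have "FK K m \<subseteq> {xs. set xs \<subseteq> A \<and> length xs = m}" unfolding FK_def A_def by fastforce
  ultimately show ?thesis using finite_lists_length_eq[of A m] finite_subset by blast
qed

lemma setL: "compact K \<Longrightarrow> set (LK K m) = FK K m"
proof -
  assume "compact K"
  then obtain xs where "set xs = FK K m" using finite_list[OF finF] by blast
  then show ?thesis unfolding LK_def by (rule someI)
qed

lemma Gs_code: "Gs (prod_encode (m, codeK K m)) = LK K m"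
  by (simp add: Gs_def codeK_def)

lemma blk_phi: "blk a (phi code x) = (if snd (prod_decode a) = code (fst (prod_decode a)) then R (fst (prod_decode a)) x else 0)"
proof (rule ext)
  fix i
  show "blk a (phi code x) i = (if snd (prod_decode a) = code (fst (prod_decode a)) then R (fst (prod_decode a)) x else 0) i"
    by (cases "snd (prod_decode a) = code (fst (prod_decode a))") (simp_all add: blk_def phi_def R_def)
qed

lemma add_phi: "additive (phi code)" unfolding additive_def
proof (intro allI ext)
  fix x y n show "phi code (x + y) n = (phi code x + phi code y) n" by (simp add: phi_def)
qed

lemma cont_phi: "continuous_on UNIV (phi code)"
proof (rule continuous_on_coordinatewise_then_product)
  fix n show "continuous_on UNIV (\<lambda>x. phi code x n)"
    unfolding phi_def by (rule cont_if_coord)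
qed

lemma phiK: assumes K: "compact K" shows "phi (codeK K) ` K \<subseteq> K0"
proof
  fix z assume "z \<in> phi (codeK K) ` K"
  then obtain k where k: "k \<in> K" "z = phi (codeK K) k" by blast
  show "z \<in> K0" unfolding K0_iff
  proof
    fix a
    show "\<exists>g\<in>insert [] (set (Gs a)). blk a z = ext g"
    proof (cases "snd (prod_decode a) = codeK K (fst (prod_decode a))")
      case True
      define m where "m = fst (prod_decode a)"
      have a: "a = prod_encode (m, codeK K m)" using True unfolding m_def
        by (metis prod.collapse prod_decode_inverse)
      have "Gs a = LK K m" unfolding a by (rule Gs_code)
      moreover have "map k [0..<m] \<in> FK K m" using k(1) unfolding FK_def by (rule imageI)
      ultimately have "map k [0..<m] \<in> set (Gs a)" by (simp add: setL[OF K])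
      moreover have "blk a z = ext (map k [0..<m])" using True k by (simp add: blk_phi ext_map m_def)
      ultimately show ?thesis by blast
    next
      case False
      then have "blk a z = ext []" using k by (simp add: blk_phi ext_Nil)
      then show ?thesis by blast
    qed
  qed
qed

lemma back_step:
  assumes K: "compact K" and N: "phi (codeK K) x \<in> gsums N K0"
  shows "\<exists>s \<in> gsums N K. R m x = R m s"
proof -
  define a where "a = prod_encode (m, codeK K m)"
  have "blk a (phi (codeK K) x) = R m x" by (simp add: blk_phi a_def)
  then have "R m x \<in> gsums N (blk a ` K0)" using gsums_hom1[OF additive_blk[of a] N] by simp
  moreover have "blk a ` K0 \<subseteq> insert 0 (R m ` K)"
  proof
    fix z assume "z \<in> blk a ` K0"
    then obtain y where y: "y \<in> K0" "z = blk a y" by blast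
    from y(1) obtain g where g: "g \<in> insert [] (set (Gs a))" "blk a y = ext g"
      unfolding K0_iff by blast
    have GL: "Gs a = LK K m" unfolding a_def by (rule Gs_code)
    show "z \<in> insert 0 (R m ` K)"
    proof (cases "g = []")
      case True
      then show ?thesis using g y by (simp add: ext_Nil)
    next
      case False
      then have "g \<in> FK K m" using g(1) GL setL[OF K, of m] by simp
      then obtain k where k: "k \<in> K" "g = map k [0..<m]" unfolding FK_def by blast
      then have "z = R m k" using g y by (simp add: ext_map)
      then show ?thesis using k(1) by blast
    qed
  qed
  ultimately have "R m x \<in> gsums N (R m ` K)" by (rule gsums_mono[rotated])
  then show ?thesis using gsums_hom2[OF additive_R[of m]] by blast
qed

lemma preimage_eq: assumes K: "compact K"
  shows "phi (codeK K) -` group_closure K0 = group_closure K"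
proof (intro equalityI subsetI)
  fix x assume "x \<in> phi (codeK K) -` group_closure K0"
  then obtain N where N: "phi (codeK K) x \<in> gsums N K0" using gc_gsums by blast
  have "\<forall>m. \<exists>s. s \<in> gsums N K \<and> R m x = R m s" using back_step[OF K N] by blast
  then obtain s where s0: "\<forall>m. s m \<in> gsums N K \<and> R m x = R m (s m)"
    using choice[of "\<lambda>m s. s \<in> gsums N K \<and> R m x = R m s"] by blast
  have s: "\<And>m. s m \<in> gsums N K" "\<And>m. R m x = R m (s m)" using s0 by auto
  have "s \<longlonglongrightarrow> x"
  proof (rule pointwise_limit)
    fix m i :: nat assume "i < m"
    then show "s m i = x i" using fun_cong[OF s(2)[of m], of i] by (simp add: R_def)
  qed
  then have "x \<in> gsums N K"
    by (rule closed_sequentially[OF compact_closed_fun[OF gsums_compact[OF K]] s(1)])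
  then show "x \<in> group_closure K" by (rule gsums_gc)
next
  fix x assume "x \<in> group_closure K"
  then have "phi (codeK K) x \<in> group_closure (phi (codeK K) ` K)" by (rule gc_hom[OF add_phi])
  then show "x \<in> phi (codeK K) -` group_closure K0" using gc_mono[OF _ phiK[OF K]] by simp
qed

theorem mainTheorem9:
  shows "\<exists>H0. compactly_generated H0 \<and>
    (\<forall>H. compactly_generated H \<longrightarrow>
      (\<exists>\<phi> :: (nat \<Rightarrow> int) \<Rightarrow> (nat \<Rightarrow> int).
         continuous_on UNIV \<phi> \<and> (\<forall>x y. \<phi> (x + y) = \<phi> x + \<phi> y) \<and> \<phi> -` H0 = H))"
proof (intro exI[of _ "group_closure K0"] conjI allI impI)
  show "compactly_generated (group_closure K0)"
    unfolding compactly_generated_def using K0_compact by blast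
next
  fix H assume "compactly_generated H"
  then obtain K where K: "compact K" "H = group_closure K" unfolding compactly_generated_def by blast
  show "\<exists>\<psi> :: (nat \<Rightarrow> int) \<Rightarrow> (nat \<Rightarrow> int). continuous_on UNIV \<psi> \<and> (\<forall>x y. \<psi> (x + y) = \<psi> x + \<psi> y) \<and> \<psi> -` group_closure K0 = H"
  proof (intro exI[of _ "phi (codeK K)"] conjI)
    show "continuous_on UNIV (phi (codeK K))" by (rule cont_phi)
    show "\<forall>x y. phi (codeK K) (x + y) = phi (codeK K) x + phi (codeK K) y"
      using add_phi by (simp add: additive_def)
    show "phi (codeK K) -` group_closure K0 = H" using preimage_eq[OF K(1)] K(2) by simp
  qed
qed

end
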